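(* Let $n,d$ be integers with $3\le d\le n-2$. Define for $x\ge d$ $$\phi(x)=\frac{2^{-(n-d+1)}\,n!}{(d-3)!\,(n-d+1)!}\int_0^d z^{d-3}(d-z)(x-z)^{n-d+1}\,dz,\qquad \Phi(x)=\frac{2^{-(n-d+1)}\,n!}{(d-3)!\,(n-d+2)!}\int_0^d z^{d-3}(d-z)(x-z)^{n-d+2}\,dz.$$ Then $\Phi(2n-d+2)>2\phi(2n-d+2)$.
   Context: Here $\Phi(x)=\int_0^x\phi(t)\,dt$ where $\phi$ on $[0,d]$ is $2^{-(n-d+1)}x^{n-1}(dn-(d-2)x)$; the displayed formulas are the values for $x\ge d$, and $2n-d+2>d$. *)

theory Defs
  imports "HOL-Analysis.Analysis"
begin

definition phi_fn :: "nat \<Rightarrow> nat \<Rightarrow> real \<Rightarrow> real" where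
  "phi_fn n d x =
     (2 powr (- real (n - d + 1)) * fact n / (fact (d - 3) * fact (n - d + 1))) *
     integral {0..real d} (\<lambda>z. z ^ (d - 3) * (real d - z) * (x - z) ^ (n - d + 1))"

definition Phi_fn :: "nat \<Rightarrow> nat \<Rightarrow> real \<Rightarrow> real" where
  "Phi_fn n d x =
     (2 powr (- real (n - d + 1)) * fact n / (fact (d - 3) * fact (n - d + 2))) *
     integral {0..real d} (\<lambda>z. z ^ (d - 3) * (real d - z) * (x - z) ^ (n - d + 2))"

end

theory Submission
  imports Defs
begin

lemma poly_int_zero:
  fixes k :: nat
  defines "D \<equiv> real k + 3"
  shows "integral {0..D} (\<lambda>z. z ^ k * (D - z) * (D - 2 - z)) = 0"
proof -
  define P where "P z = D * (D - 2) * z ^ (k+1) / (k+1) - (2*D - 2) * z ^ (k+2) / (k+2)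
      + z ^ (k+3) / (k+3)" for z :: real
  have der: "(P has_vector_derivative (z ^ k * (D - z) * (D - 2 - z))) (at z within {0..D})" for z
    unfolding P_def has_real_derivative_iff_has_vector_derivative[symmetric]
    apply (rule derivative_eq_intros refl | simp)+
    apply (simp add: field_simps power_Suc)
    done
  have "0 \<le> D" unfolding D_def by simp
  then have "((\<lambda>z. z ^ k * (D - z) * (D - 2 - z)) has_integral (P D - P 0)) {0..D}"
    by (intro fundamental_theorem_of_calculus) (auto intro: der)
  moreover have "P D - P 0 = 0"
  proof -
    have "P D = D ^ (k+1) * (D * (D-2) / (k+1) - (2*D-2) * D / (k+2) + D^2 / (k+3))"
      unfolding P_def by (simp add: field_simps power_add power2_eq_square power3_eq_cube)
    also have "D * (D-2) / (k+1) - (2*D-2) * D / (k+2) + D^2 / (k+3) = 0"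
    proof -
      have "D * (D-2) / (k+1) = D" unfolding D_def by (simp add: field_simps)
      moreover have "(2*D-2) * D / (k+2) = 2 * D" unfolding D_def by (simp add: field_simps)
      moreover have "D^2 / (k+3) = D" unfolding D_def by (simp add: field_simps power2_eq_square)
      ultimately show ?thesis by simp
    qed
    finally show ?thesis unfolding P_def by simp
  qed
  ultimately show ?thesis by (simp add: integral_unique)
qed

lemma pow_diff_pos:
  fixes s t :: real
  assumes "0 \<le> s" "s < t" "0 < m"
  shows "s ^ m < t ^ m"
  using assms by (simp add: power_strict_mono)

lemma alg_aux:
  fixes A B C F M :: real
  assumes "F > 0" "M \<ge> 0"
  shows "C / ((M + 1) * F) * A - 2 * (C / F * B) = C / ((M + 1) * F) * (A - 2 * (M + 1) * B)"
proof -
  have "M + 1 \<noteq> 0" using assms by simp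
  then have "C / F * B = C / ((M + 1) * F) * ((M + 1) * B)" by simp
  then show ?thesis by (simp only: right_diff_distrib mult.assoc mult.left_commute[of 2])
qed

theorem lemma4p12:
  fixes n d :: nat
  assumes "3 \<le> d" and "d + 2 \<le> n"
  shows "Phi_fn n d (real (2 * n - d + 2)) > 2 * phi_fn n d (real (2 * n - d + 2))"
proof -
  obtain k where k: "d = k + 3" using assms(1) by (metis add.commute le_Suc_ex)
  define m where "m = n - d + 1"
  define x where "x = real (2 * n - d + 2)"
  define D where "D = real k + 3"
  have Dd: "real d = D" unfolding D_def k by simp
  have m2: "n - d + 2 = m + 1" unfolding m_def using assms by simp
  have m3: "m \<ge> 3" unfolding m_def using assms by simp
  have xD: "x = D - 2 + 2 * (real m + 1)"
    unfolding x_def m_def D_def using assms k by (simp add: of_nat_diff)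
  have xpos: "x - D > 0" using xD m3 by simp
  define w where "w z = z ^ k * (D - z)" for z :: real
  define A where "A = integral {0..D} (\<lambda>z. w z * (x - z) ^ (m + 1))"
  define B where "B = integral {0..D} (\<lambda>z. w z * (x - z) ^ m)"
  define H where "H z = w z * (D - 2 - z) * ((x - z) ^ m - (x - (D - 2)) ^ m)" for z
  have cH: "continuous_on {0..D} H" unfolding H_def w_def by (intro continuous_intros)
  have cw: "continuous_on {0..D} (\<lambda>z. w z * (x - z) ^ m * (D - 2 - z))"
    unfolding w_def by (intro continuous_intros)
  have Hnn: "H z \<ge> 0" if "z \<in> {0..D}" for z
  proof -
    have w0: "w z \<ge> 0" using that unfolding w_def by auto
    have "(D - 2 - z) * ((x - z) ^ m - (x - (D - 2)) ^ m) \<ge> 0"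
    proof (cases "z \<le> D - 2")
      case True
      then have "(x - (D - 2)) ^ m \<le> (x - z) ^ m"
        using xpos by (intro power_mono) auto
      then show ?thesis using True by auto
    next
      case False
      then have "(x - z) ^ m \<le> (x - (D - 2)) ^ m"
        using xpos that by (intro power_mono) auto
      then show ?thesis using False by (auto intro: mult_nonpos_nonpos)
    qed
    then show ?thesis unfolding H_def using w0 by (simp add: mult.assoc k)
  qed
  have Hne: "H ((D - 2) / 2) \<noteq> 0"
  proof -
    have D3: "D \<ge> 3" unfolding D_def by simp
    have "(x - (D - 2)) ^ m < (x - (D - 2) / 2) ^ m"
      using xpos D3 m3 by (intro pow_diff_pos) (auto simp: field_simps)
    moreover have "w ((D - 2) / 2) > 0" unfolding w_def using D3 by auto
    ultimately show ?thesis unfolding H_def using D3 by auto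
  qed
  have intH: "integral {0..D} H > 0"
  proof -
    have "integral {0..D} H \<ge> 0"
      by (rule integral_nonneg) (auto intro: integrable_continuous_interval cH Hnn)
    moreover have "integral {0..D} H \<noteq> 0"
    proof
      assume "integral {0..D} H = 0"
      then have "\<forall>z\<in>{0..D}. H z = 0"
        using integral_eq_0_iff[of 0 D H] cH Hnn unfolding D_def by auto
      moreover have "(D - 2) / 2 \<in> {0..D}" unfolding D_def by auto
      ultimately show False using Hne by auto
    qed
    ultimately show ?thesis by linarith
  qed
  have int0: "integral {0..D} (\<lambda>z. w z * (D - 2 - z)) = 0"
    using poly_int_zero[of k] unfolding w_def D_def by simp
  have iw: "(\<lambda>z. w z * (D - 2 - z)) integrable_on {0..D}"
    unfolding w_def by (intro integrable_continuous_interval continuous_intros)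
  have iw2: "(\<lambda>z. w z * (x - z) ^ m * (D - 2 - z)) integrable_on {0..D}"
    using cw by (intro integrable_continuous_interval)
  have "integral {0..D} H = integral {0..D} (\<lambda>z. w z * (x - z) ^ m * (D - 2 - z))
       - (x - (D - 2)) ^ m * integral {0..D} (\<lambda>z. w z * (D - 2 - z))"
  proof -
    have "integral {0..D} H = integral {0..D} (\<lambda>z. w z * (x - z) ^ m * (D - 2 - z)
       - (x - (D - 2)) ^ m * (w z * (D - 2 - z)))"
      unfolding H_def by (rule integral_cong) (simp add: algebra_simps)
    also have "\<dots> = integral {0..D} (\<lambda>z. w z * (x - z) ^ m * (D - 2 - z))
       - integral {0..D} (\<lambda>z. (x - (D - 2)) ^ m * (w z * (D - 2 - z)))"
      using iw2 unfolding w_def by (intro integral_diff integrable_continuous_interval continuous_intros)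
    finally show ?thesis by simp
  qed
  then have pos: "integral {0..D} (\<lambda>z. w z * (x - z) ^ m * (D - 2 - z)) > 0"
    using intH int0 by simp
  have iA: "(\<lambda>z. w z * (x - z) ^ (m + 1)) integrable_on {0..D}"
    unfolding w_def by (intro integrable_continuous_interval continuous_intros)
  have iB: "(\<lambda>z. w z * (x - z) ^ m) integrable_on {0..D}"
    unfolding w_def by (intro integrable_continuous_interval continuous_intros)
  have "integral {0..D} (\<lambda>z. w z * (x - z) ^ m * (D - 2 - z))
      = integral {0..D} (\<lambda>z. w z * (x - z) ^ (m + 1) - 2 * (real m + 1) * (w z * (x - z) ^ m))"
    by (rule integral_cong) (simp add: xD algebra_simps)
  also have "\<dots> = A - 2 * (real m + 1) * B"
    unfolding A_def B_def using iA iB by (simp add: integral_diff)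
  finally have AB: "A - 2 * (real m + 1) * B > 0" using pos by simp
  define C where "C = 2 powr (- real (n - d + 1)) * fact n / fact (d - 3)"
  have Cpos: "C > 0" unfolding C_def by simp
  have Phi: "Phi_fn n d x = C / fact (m + 1) * A"
    unfolding Phi_fn_def C_def A_def w_def Dd m2 by (simp add: mult.assoc k)
  have phi: "phi_fn n d x = C / fact m * B"
    unfolding phi_fn_def C_def B_def w_def Dd m_def by (simp add: mult.assoc k)
  have "Phi_fn n d x - 2 * phi_fn n d x = C / fact (m + 1) * (A - 2 * (real m + 1) * B)"
  proof -
    have fm: "(fact (m + 1) :: real) = (real m + 1) * fact m" by (simp add: algebra_simps)
    have p: "(real m + 1) * (fact m :: real) > 0" by simp
    show ?thesis unfolding Phi phi fm
      by (rule alg_aux) auto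
  qed
  also have "\<dots> > 0" using Cpos AB by simp
  finally show ?thesis unfolding x_def by simp
qed

end
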